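(* Let $k\ge 3$ and let $w$ be a word over $\{a,b\}$. Let $p,q\in\{u,v\}$ be two consecutive, non-overlapping occurrences in $w$ (with $p$ occurring before $q$), and let $pxq$ be the corresponding factor of $w$, where $|x|\ge 0$. Let $F_p,F_q\subseteq\{0,\dots,k-1\}$ be the sets of forbidden local positions in $p$ and $q$ respectively. Then $$F_p\subseteq\{(j+|x|)\bmod k \mid j\in F_q\}\cup\{0\}.$$
   Context: $\Sigma=\{a,b\}$. For $k\ge 3$, $S_k=\left(\Sigma^k\setminus\{ba^{k-1},b^{k-1}a\}\right)\cup\left(\Sigma^{k-1}\setminus\{a^{k-1},b^{k-1}\}\right)$, $u=ba^{k-1}$, $v=b^{k-1}a$. $\mathit{Pref}(S^* )$ denotes the set of all prefixes of words in $S^*$. For $w=w_1\cdots w_n$, $w[i..j]=w_i\cdots w_j$ (empty if $i>j$). A position $j$, $0\le j\le n-1$, is forbidden in $w$ if $w[j+1..n]\notin\mathit{Pref}(S_k^* )$. An occurrence of $p\in\{u,v\}$ in $w$ is an index $s$ with $w[s+1..s+k]=p$; local position $i\in\{0,\dots,k-1\}$ of the occurrence is the position $s+i$ of $w$, and it is forbidden in the occurrence if $s+i$ is forbidden in $w$. Two occurrences of words from $\{u,v\}$ starting at $s<t$ overlap if $t<s+k$; they are consecutive if either they overlap or they are the only occurrences of $u$ or $v$ lying inside the factor $w[s+1..t+k]$. *)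

theory Defs
  imports Main
begin

datatype sym = a | b

type_synonym word = "sym list"

definition u :: "nat \<Rightarrow> word" where
  "u k = [b] @ replicate (k - 1) a"

definition v :: "nat \<Rightarrow> word" where
  "v k = replicate (k - 1) b @ [a]"

definition S :: "nat \<Rightarrow> word set" where
  "S k = ({w. length w = k} - {u k, v k})
       \<union> ({w. length w = k - 1} - {replicate (k - 1) a, replicate (k - 1) b})"

definition PrefStar :: "word set \<Rightarrow> word set" where
  "PrefStar L = {y. \<exists>z ws. set ws \<subseteq> L \<and> y @ z = concat ws}"

text \<open>Position j (0 \<le> j \<le> n-1) is forbidden in w if w[j+1..n] = drop j w is not in Pref(S_k^*).\<close>
definition forbidden :: "nat \<Rightarrow> word \<Rightarrow> nat \<Rightarrow> bool" where
  "forbidden k w j \<longleftrightarrow> j < length w \<and> drop j w \<notin> PrefStar (S k)"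

text \<open>An occurrence of p in w at index s: w[s+1..s+k] = p (k = length p).\<close>
definition occ :: "word \<Rightarrow> word \<Rightarrow> nat \<Rightarrow> bool" where
  "occ w p s \<longleftrightarrow> s + length p \<le> length w \<and> take (length p) (drop s w) = p"

definition occ_uv :: "nat \<Rightarrow> word \<Rightarrow> nat \<Rightarrow> bool" where
  "occ_uv k w s \<longleftrightarrow> occ w (u k) s \<or> occ w (v k) s"

definition consecutive :: "nat \<Rightarrow> word \<Rightarrow> nat \<Rightarrow> nat \<Rightarrow> bool" where
  "consecutive k w s t \<longleftrightarrow> s < t \<and> occ_uv k w s \<and> occ_uv k w t \<and>
     (t < s + k \<or> (\<forall>r. occ_uv k w r \<and> s \<le> r \<and> r + k \<le> t + k \<longrightarrow> r = s \<or> r = t))"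

definition forbidden_local :: "nat \<Rightarrow> word \<Rightarrow> nat \<Rightarrow> nat set" where
  "forbidden_local k w s = {i. i < k \<and> forbidden k w (s + i)}"

end

theory Submission
  imports Defs
begin

lemma len_u: "k \<ge> 1 \<Longrightarrow> length (u k) = k" by (simp add: u_def)
lemma len_v: "k \<ge> 1 \<Longrightarrow> length (v k) = k" by (simp add: v_def)

lemma prefstar_cons: "y \<in> PrefStar L \<Longrightarrow> z \<in> L \<Longrightarrow> z @ y \<in> PrefStar L"
  unfolding PrefStar_def
  by (auto intro!: exI[of _ "z # ws" for ws] simp: ) (metis append.assoc concat.simps(2) insert_subset list.simps(15))

lemma blocks:
  assumes "k \<ge> 1"
  shows "\<lbrakk>\<forall>l<m. take k (drop (pos + l*k) w) \<notin> {u k, v k}; pos + m*k \<le> length w;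
          drop (pos + m*k) w \<in> PrefStar (S k)\<rbrakk> \<Longrightarrow> drop pos w \<in> PrefStar (S k)"
proof (induction m arbitrary: pos)
  case 0 then show ?case by simp
next
  case (Suc m)
  have h1: "\<forall>l<m. take k (drop ((pos + k) + l*k) w) \<notin> {u k, v k}"
  proof (intro allI impI)
    fix l assume "l < m"
    then have "take k (drop (pos + (Suc l)*k) w) \<notin> {u k, v k}" using Suc.prems(1) by auto
    then show "take k (drop ((pos + k) + l*k) w) \<notin> {u k, v k}" by (simp add: add.assoc)
  qed
  have h2: "(pos + k) + m*k \<le> length w" using Suc.prems(2) by simp
  have h3: "drop ((pos + k) + m*k) w \<in> PrefStar (S k)" using Suc.prems(3) by (simp add: add.assoc)
  have IH: "drop (pos + k) w \<in> PrefStar (S k)" using Suc.IH[OF h1 h2 h3] .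
  have blk: "take k (drop pos w) \<in> S k"
    using Suc.prems(1,2) unfolding S_def by auto
  have "drop pos w = take k (drop pos w) @ drop (pos + k) w"
    by (metis append_take_drop_id drop_drop add.commute)
  then show ?case using prefstar_cons[OF IH blk] by simp
qed

theorem lemma3:
  fixes k :: nat and w p q x :: word and s t :: nat
  assumes "k \<ge> 3"
    and "p \<in> {u k, v k}" and "q \<in> {u k, v k}"
    and "occ w p s" and "occ w q t" and "s < t"
    and "consecutive k w s t"
    and "s + k \<le> t"
    and "x = take (t - (s + k)) (drop (s + k) w)"
  shows "forbidden_local k w s
           \<subseteq> {(j + length x) mod k | j. j \<in> forbidden_local k w t} \<union> {0}"
proof
  fix i assume iF: "i \<in> forbidden_local k w s"
  have k1: "k \<ge> 1" using assms(1) by simp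
  have ik: "i < k" and fs: "forbidden k w (s + i)" using iF by (auto simp: forbidden_local_def)
  have lq: "length q = k" using assms(3) len_u len_v k1 by auto
  have tk: "t + k \<le> length w" using assms(5) lq by (simp add: occ_def)
  define L where "L = t - (s + k)"
  have lx: "length x = L" using assms(9) tk assms(8) by (simp add: L_def)
  define j where "j = (i + k - L mod k) mod k"
  have jk: "j < k" using k1 by (simp add: j_def)
  have jL: "(L + j) mod k = i"
  proof -
    have "(L + j) mod k = (L + (i + k - L mod k)) mod k" by (simp add: j_def mod_add_right_eq)
    also have "L + (i + k - L mod k) = (L div k) * k + i + k"
      using mod_less_divisor[of k L] k1 div_mult_mod_eq[of L k] by linarith
    also have "((L div k) * k + i + k) mod k = i" using ik by simp
    finally show ?thesis .
  qed
  show "i \<in> {(j + length x) mod k | j. j \<in> forbidden_local k w t} \<union> {0}"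
  proof (cases "i = 0")
    case True then show ?thesis by simp
  next
    case False
    show ?thesis
    proof (cases "forbidden k w (t + j)")
      case True
      then have "j \<in> forbidden_local k w t" using jk by (simp add: forbidden_local_def)
      then show ?thesis using jL lx by (auto simp: add.commute)
    next
      case nf: False
      have "L + j = k * ((L + j) div k) + i" using jL div_mult_mod_eq[of "L+j" k] by (simp add: mult.commute)
      then obtain m where tm: "t + j = s + i + m * k"
        using assms(8) L_def by (intro that[of "(L + j) div k + 1"]) (simp add: algebra_simps)
      have dropt: "drop (t + j) w \<in> PrefStar (S k)"
        using nf jk tk by (simp add: forbidden_def)
      have noocc: "\<forall>l<m. take k (drop (s + i + l*k) w) \<notin> {u k, v k}"
      proof (intro allI impI notI)
        fix l assume lm: "l < m" and tin: "take k (drop (s + i + l*k) w) \<in> {u k, v k}"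
        define r where "r = s + i + l*k"
        have "Suc l * k \<le> m * k" using lm by (intro mult_le_mono1) simp
        then have rk: "r + k \<le> t + j" using tm by (simp add: r_def)
        have "occ_uv k w r" using tin rk tk jk len_u[OF k1] len_v[OF k1]
          unfolding occ_uv_def occ_def r_def by auto
        moreover have "s \<le> r" "r + k \<le> t + k" using rk jk by (auto simp: r_def)
        ultimately have "r = s \<or> r = t" using assms(7,8) unfolding consecutive_def by auto
        moreover have "r \<noteq> s" using False by (simp add: r_def)
        moreover have "r \<noteq> t" using rk jk by simp
        ultimately show False by simp
      qed
      have "drop (s + i) w \<in> PrefStar (S k)"
        using blocks[OF k1 noocc] tm tk jk dropt by simp
      then have False using fs by (simp add: forbidden_def)
      then show ?thesis ..
    qed
  qed
qed

end
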